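(* For a finite graph $G$, let $M(G)$ be the maximum number of distinct subsets of $V(G)$ such that any two distinct subsets in the family are neighbors. Let $K_{m,n}$ be the complete bipartite graph with parts of sizes $m$ and $n$. Then $$M(K_{m,n})=(2^m-1)(2^n-1)+2.$$ More generally, if $K_{n_1,\dots,n_r}$ is the complete multipartite graph with disjoint parts (maximal stable sets) of cardinalities $n_1,\dots,n_r$, then $$M(K_{n_1,\dots,n_r})=2^{\sum_{i=1}^r n_i}-\sum_{i=1}^r 2^{n_i}+2r-1.$$
   Context: Two subsets $A,B$ of the vertex set of a graph $G$ are called neighbors if there exist $a\in A$ and $b\in B$ such that $a$ and $b$ are adjacent in $G$. (A subset may or may not be its own neighbor.) *)

theory Defs
  imports Main
begin

text \<open>A finite graph is given by a vertex set V and a symmetric irreflexive adjacency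
relation E. Two vertex subsets A, B are neighbors if some a in A is adjacent to some b in B.\<close>

definition neighbors :: "('a \<Rightarrow> 'a \<Rightarrow> bool) \<Rightarrow> 'a set \<Rightarrow> 'a set \<Rightarrow> bool" where
  "neighbors E A B \<longleftrightarrow> (\<exists>a\<in>A. \<exists>b\<in>B. E a b)"

definition nbr_family :: "'a set \<Rightarrow> ('a \<Rightarrow> 'a \<Rightarrow> bool) \<Rightarrow> 'a set set \<Rightarrow> bool" where
  "nbr_family V E F \<longleftrightarrow> F \<subseteq> Pow V \<and> (\<forall>A\<in>F. \<forall>B\<in>F. A \<noteq> B \<longrightarrow> neighbors E A B)"

definition M :: "'a set \<Rightarrow> ('a \<Rightarrow> 'a \<Rightarrow> bool) \<Rightarrow> nat" where
  "M V E = Max (card ` {F. nbr_family V E F})"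

text \<open>Complete multipartite graph with parts of sizes ns!0, ..., ns!(r-1):
  vertex (i,j) is the j-th vertex of part i; two vertices are adjacent iff in different parts.\<close>
definition cmp_V :: "nat list \<Rightarrow> (nat \<times> nat) set" where
  "cmp_V ns = {(i, j). i < length ns \<and> j < ns ! i}"

definition cmp_E :: "nat list \<Rightarrow> (nat \<times> nat) \<Rightarrow> (nat \<times> nat) \<Rightarrow> bool" where
  "cmp_E ns x y \<longleftrightarrow> x \<in> cmp_V ns \<and> y \<in> cmp_V ns \<and> fst x \<noteq> fst y"

definition cbp_V :: "nat \<Rightarrow> nat \<Rightarrow> (nat \<times> nat) set" where
  "cbp_V m n = cmp_V [m, n]"

definition cbp_E :: "nat \<Rightarrow> nat \<Rightarrow> (nat \<times> nat) \<Rightarrow> (nat \<times> nat) \<Rightarrow> bool" where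
  "cbp_E m n = cmp_E [m, n]"

end

theory Submission
  imports Defs
begin

definition Pt :: "nat list \<Rightarrow> nat \<Rightarrow> (nat \<times> nat) set" where
  "Pt ns i = (\<lambda>j. (i,j)) ` {..<ns!i}"

lemma card_Pt: "card (Pt ns i) = ns ! i"
  unfolding Pt_def by (simp add: card_image inj_on_def)

lemma fin_Pt: "finite (Pt ns i)"
  unfolding Pt_def by simp

lemma V_UN: "cmp_V ns = (\<Union>i<length ns. Pt ns i)"
  unfolding cmp_V_def Pt_def by auto

lemma fin_V: "finite (cmp_V ns)"
  unfolding V_UN by (simp add: fin_Pt)

lemma card_V: "card (cmp_V ns) = sum_list ns"
proof -
  have "card (cmp_V ns) = (\<Sum>i<length ns. card (Pt ns i))"
    unfolding V_UN by (rule card_UN_disjoint) (auto simp: fin_Pt Pt_def)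
  also have "\<dots> = (\<Sum>i<length ns. ns ! i)" by (simp add: card_Pt)
  also have "\<dots> = sum_list ns" by (simp add: sum_list_sum_nth atLeast0LessThan)
  finally show ?thesis .
qed

definition Tset :: "nat list \<Rightarrow> (nat \<times> nat) set set" where
  "Tset ns = {A \<in> Pow (cmp_V ns). \<exists>i<length ns. A \<subseteq> Pt ns i}"

definition Sset :: "nat list \<Rightarrow> (nat \<times> nat) set set" where
  "Sset ns = Pow (cmp_V ns) - Tset ns"

lemma T_eq: "ns \<noteq> [] \<Longrightarrow> Tset ns = insert {} (\<Union>i<length ns. Pow (Pt ns i) - {{}})"
  unfolding Tset_def V_UN by auto

lemma card_T: assumes "ns \<noteq> []"
  shows "card (Tset ns) = 1 + (\<Sum>i<length ns. 2 ^ (ns!i) - 1)"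
proof -
  have "card (\<Union>i<length ns. Pow (Pt ns i) - {{}}) = (\<Sum>i<length ns. card (Pow (Pt ns i) - {{}}))"
    by (rule card_UN_disjoint) (auto simp: fin_Pt Pt_def)
  also have "\<dots> = (\<Sum>i<length ns. 2 ^ (ns!i) - 1)"
    by (simp add: fin_Pt card_Pow card_Pt)
  finally have h: "card (\<Union>i<length ns. Pow (Pt ns i) - {{}}) = (\<Sum>i<length ns. 2 ^ (ns!i) - 1)" .
  have "{} \<notin> (\<Union>i<length ns. Pow (Pt ns i) - {{}})" by auto
  moreover have "finite (\<Union>i<length ns. Pow (Pt ns i) - {{}})" by (simp add: fin_Pt)
  ultimately show ?thesis unfolding T_eq[OF assms] using h card_insert_disjoint by (metis plus_1_eq_Suc)
qed

lemma card_S: assumes "ns \<noteq> []"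
  shows "int (card (Sset ns)) = 2 ^ sum_list ns - 1 - (\<Sum>i<length ns. 2 ^ (ns!i) - 1)"
proof -
  have sub: "Tset ns \<subseteq> Pow (cmp_V ns)" unfolding Tset_def by auto
  have "card (Sset ns) = card (Pow (cmp_V ns)) - card (Tset ns)"
    unfolding Sset_def by (rule card_Diff_subset) (use sub fin_V in \<open>auto intro: finite_subset\<close>)
  moreover have "card (Tset ns) \<le> card (Pow (cmp_V ns))"
    by (rule card_mono) (use sub fin_V in auto)
  ultimately have "int (card (Sset ns)) = int (card (Pow (cmp_V ns))) - int (card (Tset ns))"
    by simp
  also have "\<dots> = 2 ^ sum_list ns - 1 - (\<Sum>i<length ns. (2::int) ^ (ns!i) - 1)"
    using card_T[OF assms] by (simp add: card_Pow fin_V card_V of_nat_diff)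
  finally show ?thesis .
qed

lemma in_Pt: "x \<in> Pt ns i \<longleftrightarrow> fst x = i \<and> snd x < ns ! i"
  unfolding Pt_def by (cases x) auto

lemma upper:
  assumes F: "nbr_family (cmp_V ns) (cmp_E ns) F"
  shows "card F \<le> card (Sset ns) + length ns"
proof -
  have FP: "F \<subseteq> Pow (cmp_V ns)" using F unfolding nbr_family_def by auto
  have finP: "finite (Pow (cmp_V ns))" by (simp add: fin_V)
  define f where "f A = (SOME i. i < length ns \<and> A \<subseteq> Pt ns i)" for A
  have fA: "f A < length ns \<and> A \<subseteq> Pt ns (f A)" if "A \<in> Tset ns" for A
    unfolding f_def by (rule someI_ex) (use that in \<open>auto simp: Tset_def\<close>)
  have inj: "inj_on f (F \<inter> Tset ns)"
  proof (rule inj_onI)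
    fix A B assume A: "A \<in> F \<inter> Tset ns" and B: "B \<in> F \<inter> Tset ns" and e: "f A = f B"
    show "A = B"
    proof (rule ccontr)
      assume "A \<noteq> B"
      then have "neighbors (cmp_E ns) A B" using A B F unfolding nbr_family_def by auto
      then obtain a b where "a \<in> A" "b \<in> B" "fst a \<noteq> fst b"
        unfolding neighbors_def cmp_E_def by auto
      moreover have "A \<subseteq> Pt ns (f A)" "B \<subseteq> Pt ns (f B)" using fA A B by auto
      ultimately show False using e by (metis in_Pt subsetD)
    qed
  qed
  have "card (F \<inter> Tset ns) \<le> card {..<length ns}"
    by (rule card_inj_on_le[OF inj]) (use fA in auto)
  moreover have "card (F \<inter> Sset ns) \<le> card (Sset ns)"
    by (rule card_mono) (use finP in \<open>auto simp: Sset_def\<close>)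
  moreover have "F = (F \<inter> Tset ns) \<union> (F \<inter> Sset ns)" using FP by (auto simp: Sset_def)
  moreover have "card ((F \<inter> Tset ns) \<union> (F \<inter> Sset ns)) \<le> card (F \<inter> Tset ns) + card (F \<inter> Sset ns)"
    by (rule card_Un_le)
  ultimately show ?thesis by simp
qed

lemma witness:
  assumes ne: "ns \<noteq> []" and pos: "\<forall>k\<in>set ns. 1 \<le> k"
  defines "W \<equiv> Sset ns \<union> (\<lambda>i. {(i,0)}) ` {..<length ns}"
  shows "nbr_family (cmp_V ns) (cmp_E ns) W" and "card W = card (Sset ns) + length ns"
proof -
  have pos': "0 < ns ! i" if "i < length ns" for i using pos that by (auto simp: in_set_conv_nth)
  have iV: "(i,0) \<in> cmp_V ns" if "i < length ns" for i using pos' that by (simp add: cmp_V_def)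
  have Smem: "A \<subseteq> cmp_V ns \<and> (\<forall>i<length ns. \<not> A \<subseteq> Pt ns i)" if "A \<in> Sset ns" for A
    using that by (auto simp: Sset_def Tset_def)
  have SS: "neighbors (cmp_E ns) A B" if "A \<in> Sset ns" "B \<in> Sset ns" for A B
  proof -
    have "\<not> B \<subseteq> Pt ns 0" using Smem[OF that(2)] ne by auto
    then obtain b where b: "b \<in> B" by auto
    have bV: "b \<in> cmp_V ns" using Smem[OF that(2)] b by auto
    then have "fst b < length ns" by (auto simp: cmp_V_def)
    then have "\<not> A \<subseteq> Pt ns (fst b)" using Smem[OF that(1)] by auto
    then obtain a where a: "a \<in> A" "a \<notin> Pt ns (fst b)" by auto
    have aV: "a \<in> cmp_V ns" using Smem[OF that(1)] a by auto
    then have "fst a \<noteq> fst b" using a by (auto simp: in_Pt cmp_V_def)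
    then show ?thesis unfolding neighbors_def cmp_E_def using a b aV bV by auto
  qed
  have ST: "neighbors (cmp_E ns) A {(i,0)}" "neighbors (cmp_E ns) {(i,0)} A"
    if "A \<in> Sset ns" "i < length ns" for A i
  proof -
    have "\<not> A \<subseteq> Pt ns i" using Smem[OF that(1)] that(2) by auto
    then obtain a where a: "a \<in> A" "a \<notin> Pt ns i" by auto
    have aV: "a \<in> cmp_V ns" using Smem[OF that(1)] a by auto
    then have "fst a \<noteq> i" using a by (auto simp: in_Pt cmp_V_def)
    then show "neighbors (cmp_E ns) A {(i,0)}" "neighbors (cmp_E ns) {(i,0)} A"
      unfolding neighbors_def cmp_E_def using a aV iV[OF that(2)] by auto
  qed
  have TT: "neighbors (cmp_E ns) {(i,0)} {(j,0)}" if "i < length ns" "j < length ns" "i \<noteq> j" for i j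
    unfolding neighbors_def cmp_E_def using iV that by auto
  show "nbr_family (cmp_V ns) (cmp_E ns) W"
    unfolding nbr_family_def W_def
    using Smem iV SS ST TT by (auto, metis)
  have disj: "Sset ns \<inter> (\<lambda>i. {(i,0)}) ` {..<length ns} = {}"
  proof -
    { fix i assume i: "i < length ns" "{(i,0)} \<in> Sset ns"
      then have "\<not> {(i,0)} \<subseteq> Pt ns i" using Smem by auto
      then have False using pos'[OF i(1)] by (auto simp: in_Pt) }
    then show ?thesis by auto
  qed
  have finS: "finite (Sset ns)" using fin_V by (auto simp: Sset_def)
  have "card ((\<lambda>i. {(i,0::nat)}) ` {..<length ns}) = length ns"
    by (subst card_image) (auto simp: inj_on_def)
  then show "card W = card (Sset ns) + length ns"
    unfolding W_def using card_Un_disjoint[OF finS _ disj] by simp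
qed

lemma M_eq:
  assumes ne: "ns \<noteq> []" and pos: "\<forall>k\<in>set ns. 1 \<le> k"
  shows "M (cmp_V ns) (cmp_E ns) = card (Sset ns) + length ns"
proof -
  define W where "W = Sset ns \<union> (\<lambda>i. {(i,0)}) ` {..<length ns}"
  note w = witness[OF ne pos, folded W_def]
  have fin: "finite (card ` {F. nbr_family (cmp_V ns) (cmp_E ns) F})"
  proof -
    have "{F. nbr_family (cmp_V ns) (cmp_E ns) F} \<subseteq> Pow (Pow (cmp_V ns))"
      by (auto simp: nbr_family_def)
    then have "finite {F. nbr_family (cmp_V ns) (cmp_E ns) F}" using fin_V by (meson Finite_Set.finite_Pow_iff finite_subset)
    then show ?thesis by simp
  qed
  show ?thesis unfolding M_def
  proof (rule Max_eqI[OF fin])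
    show "y \<le> card (Sset ns) + length ns" if "y \<in> card ` {F. nbr_family (cmp_V ns) (cmp_E ns) F}" for y
      using that upper by auto
    show "card (Sset ns) + length ns \<in> card ` {F. nbr_family (cmp_V ns) (cmp_E ns) F}"
      using w by (metis (mono_tags, lifting) image_eqI mem_Collect_eq)
  qed
qed

lemma general:
  assumes ne: "ns \<noteq> []" and pos: "\<forall>k\<in>set ns. 1 \<le> k"
  shows "int (M (cmp_V ns) (cmp_E ns)) = 2 ^ (sum_list ns) - (\<Sum>k\<leftarrow>ns. 2 ^ k) + 2 * int (length ns) - 1"
proof -
  have "(\<Sum>k\<leftarrow>ns. (2::int) ^ k) = (\<Sum>i<length ns. 2 ^ (ns!i))"
    by (simp add: sum_list_sum_nth atLeast0LessThan)
  moreover have "(\<Sum>i<length ns. (2::int) ^ (ns!i) - 1) = (\<Sum>i<length ns. 2 ^ (ns!i)) - int (length ns)"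
    by (simp add: sum_subtractf)
  ultimately show ?thesis using M_eq[OF ne pos] card_S[OF ne] by simp
qed

theorem proposition1:
  shows "(\<forall>m n::nat. 1 \<le> m \<longrightarrow> 1 \<le> n \<longrightarrow>
            int (M (cbp_V m n) (cbp_E m n)) = (2 ^ m - 1) * (2 ^ n - 1) + 2)
       \<and> (\<forall>ns::nat list. ns \<noteq> [] \<longrightarrow> (\<forall>k\<in>set ns. 1 \<le> k) \<longrightarrow>
            int (M (cmp_V ns) (cmp_E ns))
              = 2 ^ (sum_list ns) - (\<Sum>k\<leftarrow>ns. 2 ^ k) + 2 * int (length ns) - 1)"
proof (intro conjI allI impI)
  fix m n :: nat assume "1 \<le> m" "1 \<le> n"
  then have "int (M (cmp_V [m,n]) (cmp_E [m,n])) = 2 ^ (m+n) - (2^m + 2^n) + 2 * 2 - 1"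
    using general[of "[m,n]"] by simp
  then show "int (M (cbp_V m n) (cbp_E m n)) = (2 ^ m - 1) * (2 ^ n - 1) + 2"
    by (simp add: cbp_V_def cbp_E_def power_add algebra_simps)
next
  fix ns :: "nat list" assume "ns \<noteq> []" "\<forall>k\<in>set ns. 1 \<le> k"
  then show "int (M (cmp_V ns) (cmp_E ns)) = 2 ^ (sum_list ns) - (\<Sum>k\<leftarrow>ns. 2 ^ k) + 2 * int (length ns) - 1"
    by (rule general)
qed

end
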